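(* Let $G$ be a real $n\times m$ matrix and $\mathbf v\in\mathbb R^n$, and let $\mathcal G=\{x\in\mathbb R^m: Gx\le \mathbf v\}$ (componentwise). Let $P$ be the nonnegative orthant of $\mathbb R^n$ and $F=\mathcal R(G)$. Write $\mathbf v=\mathbf v_F+\upsilon$, where $\mathbf v_F$ is the orthogonal projection of $\mathbf v$ onto $F$ and $\upsilon$ is the orthogonal projection of $\mathbf v$ onto $F^\perp$. Assume $\upsilon\neq0$, $F\cap P=\{0\}$, and $\mathcal G\neq\emptyset$. Let $C_e=\{t\upsilon+z:t\ge0,\ z\in F\}$ and $P_c=(\mathbf v+F)\cap P$. Then $$\mathrm{Co}(P_c)=C_e\cap P,$$ where $\mathrm{Co}(S)$ denotes the convex cone generated by the set $S$, i.e. the set of all finite nonnegative linear combinations of elements of $S$.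
   Context: $P_c$ is called the contact polytope. Note that $\mathbf v+F=\upsilon+F$. *)

theory Defs
  imports "HOL-Analysis.Analysis"
begin

end

theory Submission
  imports Defs
begin

theorem mainTheorem2:
  fixes G :: "real ^ 'm ^ 'n" and v vF \<upsilon> :: "real ^ 'n"
  defines "F \<equiv> range (\<lambda>x. G *v x)"
    and "P \<equiv> {y :: real ^ 'n. \<forall>i. 0 \<le> y $ i}"
    and "GG \<equiv> {x :: real ^ 'm. \<forall>i. (G *v x) $ i \<le> v $ i}"
    and "Ce \<equiv> {t *\<^sub>R \<upsilon> + z | t z. t \<ge> 0 \<and> z \<in> range (\<lambda>x. G *v x)}"
    and "Pc \<equiv> ((\<lambda>z. v + z) ` range (\<lambda>x. G *v x)) \<inter> {y :: real ^ 'n. \<forall>i. 0 \<le> y $ i}"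
  assumes vF_in: "vF \<in> F"
    and ups_orth: "\<forall>z\<in>F. orthogonal \<upsilon> z"
    and decomp: "v = vF + \<upsilon>"
    and ups_nz: "\<upsilon> \<noteq> 0"
    and FP: "F \<inter> P = {0}"
    and GG_ne: "GG \<noteq> {}"
  shows "convex_cone hull Pc = Ce \<inter> P"
proof
  have sF: "subspace F" unfolding F_def
    by (rule linear_subspace_image[OF matrix_vector_mul_linear subspace_UNIV])
  have ccCe: "convex_cone (Ce \<inter> P)"
    unfolding convex_cone_iff
  proof (intro conjI ballI allI impI)
    show "0 \<in> Ce \<inter> P" unfolding Ce_def P_def
      using subspace_0[OF sF] F_def by force
  next
    fix x y assume x: "x \<in> Ce \<inter> P" and y: "y \<in> Ce \<inter> P"
    from x obtain t z where "x = t *\<^sub>R \<upsilon> + z" "t \<ge> 0" "z \<in> F" unfolding Ce_def F_def by blast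
    moreover from y obtain s w where "y = s *\<^sub>R \<upsilon> + w" "s \<ge> 0" "w \<in> F" unfolding Ce_def F_def by blast
    ultimately have "x + y = (t + s) *\<^sub>R \<upsilon> + (z + w)" "t + s \<ge> 0" "z + w \<in> F"
      using subspace_add[OF sF] by (auto simp: algebra_simps)
    hence "x + y \<in> Ce" unfolding Ce_def F_def by blast
    moreover have "x + y \<in> P" using x y unfolding P_def by auto
    ultimately show "x + y \<in> Ce \<inter> P" by blast
  next
    fix x and c :: real assume x: "x \<in> Ce \<inter> P" and c: "0 \<le> c"
    from x obtain t z where "x = t *\<^sub>R \<upsilon> + z" "t \<ge> 0" "z \<in> F" unfolding Ce_def F_def by blast
    hence "c *\<^sub>R x = (c * t) *\<^sub>R \<upsilon> + c *\<^sub>R z" "c * t \<ge> 0" "c *\<^sub>R z \<in> F"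
      using subspace_scale[OF sF] c by (auto simp: algebra_simps)
    hence "c *\<^sub>R x \<in> Ce" unfolding Ce_def F_def by blast
    moreover have "c *\<^sub>R x \<in> P" using x c unfolding P_def by auto
    ultimately show "c *\<^sub>R x \<in> Ce \<inter> P" by blast
  qed
  have "Pc \<subseteq> Ce \<inter> P"
  proof
    fix y assume "y \<in> Pc"
    then obtain z where z: "z \<in> F" "y = v + z" "y \<in> P" unfolding Pc_def F_def P_def by blast
    have "y = 1 *\<^sub>R \<upsilon> + (vF + z)" using z decomp by simp
    moreover have "vF + z \<in> F" using subspace_add[OF sF vF_in z(1)] .
    ultimately have "y \<in> Ce" unfolding Ce_def F_def using zero_le_one by blast
    thus "y \<in> Ce \<inter> P" using z by blast
  qed
  thus "convex_cone hull Pc \<subseteq> Ce \<inter> P" using ccCe by (rule hull_minimal)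
next
  have sF: "subspace F" unfolding F_def
    by (rule linear_subspace_image[OF matrix_vector_mul_linear subspace_UNIV])
  show "Ce \<inter> P \<subseteq> convex_cone hull Pc"
  proof
    fix y assume y: "y \<in> Ce \<inter> P"
    from y obtain t z where tz: "y = t *\<^sub>R \<upsilon> + z" "t \<ge> 0" "z \<in> F" unfolding Ce_def F_def by blast
    show "y \<in> convex_cone hull Pc"
    proof (cases "t = 0")
      case True
      hence "y \<in> F \<inter> P" using tz y by auto
      hence "y = 0" using FP by blast
      thus ?thesis using convex_cone_hull_contains_0 by simp
    next
      case False
      hence tp: "t > 0" using tz by simp
      define w where "w = (1/t) *\<^sub>R y"
      have "w = v + ((1/t) *\<^sub>R z - vF)" using tz tp decomp unfolding w_def
        by (simp add: algebra_simps)
      moreover have "(1/t) *\<^sub>R z - vF \<in> F"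
        using subspace_diff[OF sF subspace_scale[OF sF tz(3)] vF_in] .
      moreover have "w \<in> P" using y tp unfolding w_def P_def by auto
      ultimately have "w \<in> Pc" unfolding Pc_def F_def P_def by blast
      hence "w \<in> convex_cone hull Pc" by (rule hull_inc)
      hence "t *\<^sub>R w \<in> convex_cone hull Pc"
        using convex_cone_scaleR[OF convex_cone_convex_cone_hull] tz(2) by blast
      moreover have "t *\<^sub>R w = y" using tp unfolding w_def by simp
      ultimately show ?thesis by simp
    qed
  qed
qed

end
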